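(* Let $M$ be a finite abelian group and $J$ a Jacobi function on $M$, and set $J^*(\alpha,\beta)=-\delta(\alpha)-\delta(\beta)+J(\alpha,\beta)$. Then $J^*(1,\alpha)\neq0$ for every non-trivial $\alpha\in M$.
   Context: $M$ is written multiplicatively with identity $1$; $\delta(\alpha)=1$ if $\alpha=1$ and $0$ otherwise. A Jacobi function on $M$ is a function $J\colon M\times M\to\mathbf{C}$ satisfying: (A) $J(\alpha,\beta)=J(\beta,\alpha)$; (B) $J^*(\alpha,\beta)J^*(\alpha\beta,\gamma)=J^*(\alpha,\beta\gamma)J^*(\beta,\gamma)$; (C) $\sum_{\beta\in M}J(\alpha_1\beta,\alpha_2\beta^{-1})J(\alpha_3\beta,\alpha_4\beta^{-1})=J(\alpha_1\alpha_4,\alpha_2\alpha_3)$; all for all elements of $M$. *)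

theory Defs
  imports "HOL-Algebra.Group" "HOL-Analysis.Analysis"
begin

definition jdelta :: "('a, 'b) monoid_scheme \<Rightarrow> 'a \<Rightarrow> complex" where
  "jdelta G a = (if a = \<one>\<^bsub>G\<^esub> then 1 else 0)"

definition jstar :: "('a, 'b) monoid_scheme \<Rightarrow> ('a \<Rightarrow> 'a \<Rightarrow> complex) \<Rightarrow> 'a \<Rightarrow> 'a \<Rightarrow> complex" where
  "jstar G J a b = - jdelta G a - jdelta G b + J a b"

definition jacobi_function :: "('a, 'b) monoid_scheme \<Rightarrow> ('a \<Rightarrow> 'a \<Rightarrow> complex) \<Rightarrow> bool" where
  "jacobi_function G J \<longleftrightarrow>
     (\<forall>a\<in>carrier G. \<forall>b\<in>carrier G. J a b = J b a) \<and>
     (\<forall>a\<in>carrier G. \<forall>b\<in>carrier G. \<forall>c\<in>carrier G.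
        jstar G J a b * jstar G J (a \<otimes>\<^bsub>G\<^esub> b) c
          = jstar G J a (b \<otimes>\<^bsub>G\<^esub> c) * jstar G J b c) \<and>
     (\<forall>a1\<in>carrier G. \<forall>a2\<in>carrier G. \<forall>a3\<in>carrier G. \<forall>a4\<in>carrier G.
        (\<Sum>b\<in>carrier G. J (a1 \<otimes>\<^bsub>G\<^esub> b) (a2 \<otimes>\<^bsub>G\<^esub> inv\<^bsub>G\<^esub> b)
                          * J (a3 \<otimes>\<^bsub>G\<^esub> b) (a4 \<otimes>\<^bsub>G\<^esub> inv\<^bsub>G\<^esub> b))
          = J (a1 \<otimes>\<^bsub>G\<^esub> a4) (a2 \<otimes>\<^bsub>G\<^esub> a3))"

end

theory Submission
  imports Defs "Jordan_Normal_Form.Jordan_Normal_Form_Existence" "HOL-Algebra.Multiplicative_Group"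
begin


definition mtr :: "complex mat \<Rightarrow> complex" where
  "mtr A = (\<Sum>i<dim_row A. A $$ (i,i))"

lemma mtr_comm:
  assumes A: "A \<in> carrier_mat n m" and B: "B \<in> carrier_mat m n"
  shows "mtr (A * B) = mtr (B * A)"
proof -
  have "mtr (A * B) = (\<Sum>i<n. \<Sum>k<m. A $$ (i,k) * B $$ (k,i))"
    using A B unfolding mtr_def
    by (auto simp: scalar_prod_def atLeast0LessThan intro!: sum.cong)
  also have "\<dots> = (\<Sum>k<m. \<Sum>i<n. B $$ (k,i) * A $$ (i,k))"
    by (subst sum.swap) (simp add: mult.commute)
  also have "\<dots> = mtr (B * A)"
    using A B unfolding mtr_def
    by (auto simp: scalar_prod_def atLeast0LessThan intro!: sum.cong)
  finally show ?thesis .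
qed

lemma mtr_similar:
  assumes "similar_mat_wit A B P Q" "A \<in> carrier_mat n n"
  shows "mtr A = mtr B"
proof -
  from assms have B: "B \<in> carrier_mat n n" and P: "P \<in> carrier_mat n n" and Q: "Q \<in> carrier_mat n n"
    and QP: "Q * P = 1\<^sub>m n" and AE: "A = P * B * Q"
    unfolding similar_mat_wit_def Let_def by auto
  have "mtr A = mtr ((P * B) * Q)" using AE by simp
  also have "\<dots> = mtr (Q * (P * B))" using P B Q by (intro mtr_comm) auto
  also have "Q * (P * B) = (Q * P) * B" using P B Q by (simp add: assoc_mult_mat)
  also have "\<dots> = B" using QP B by simp
  finally show ?thesis .
qed

lemma diag_block_mat_eq_blocks:
  assumes "\<And>x. x \<in> set xs \<Longrightarrow> f x \<in> carrier_mat (d x) (d x) \<and> g x \<in> carrier_mat (d x) (d x)"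
    and "diag_block_mat (map f xs) = diag_block_mat (map g xs)"
  shows "\<forall>x\<in>set xs. f x = g x"
  using assms
proof (induction xs)
  case Nil
  then show ?case by simp
next
  case (Cons x xs)
  let ?F = "diag_block_mat (map f xs)" and ?G = "diag_block_mat (map g xs)"
  have fx: "f x \<in> carrier_mat (d x) (d x)" and gx: "g x \<in> carrier_mat (d x) (d x)"
    using Cons.prems(1) by auto
  have dF: "dim_row ?F = dim_row ?G" "dim_col ?F = dim_col ?G"
  proof -
    have r: "map dim_row (map f xs) = map dim_row (map g xs)"
      "map dim_col (map f xs) = map dim_col (map g xs)"
    proof -
      have "dim_row (f y) = dim_row (g y) \<and> dim_col (f y) = dim_col (g y)" if "y \<in> set xs" for y
        using Cons.prems(1)[of y] that unfolding carrier_mat_def by simp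
      then show "map dim_row (map f xs) = map dim_row (map g xs)"
        "map dim_col (map f xs) = map dim_col (map g xs)" by (simp_all add: map_eq_conv)
    qed
    show "dim_row ?F = dim_row ?G" "dim_col ?F = dim_col ?G"
      unfolding dim_diag_block_mat r by simp_all
  qed
  have E: "four_block_mat (f x) (0\<^sub>m (dim_row (f x)) (dim_col ?F)) (0\<^sub>m (dim_row ?F) (dim_col (f x))) ?F
     = four_block_mat (g x) (0\<^sub>m (dim_row (g x)) (dim_col ?G)) (0\<^sub>m (dim_row ?G) (dim_col (g x))) ?G"
    using Cons.prems(2) by (simp add: Let_def)
  have "f x = g x"
  proof (rule eq_matI)
    fix i j assume ij: "i < dim_row (g x)" "j < dim_col (g x)"
    have "four_block_mat (f x) (0\<^sub>m (dim_row (f x)) (dim_col ?F)) (0\<^sub>m (dim_row ?F) (dim_col (f x))) ?F $$ (i,j)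
      = four_block_mat (g x) (0\<^sub>m (dim_row (g x)) (dim_col ?G)) (0\<^sub>m (dim_row ?G) (dim_col (g x))) ?G $$ (i,j)"
      using E by simp
    then show "f x $$ (i,j) = g x $$ (i,j)" using ij fx gx dF by simp
  qed (use fx gx in auto)
  moreover have "?F = ?G"
  proof (rule eq_matI)
    fix i j assume ij: "i < dim_row ?G" "j < dim_col ?G"
    have "four_block_mat (f x) (0\<^sub>m (dim_row (f x)) (dim_col ?F)) (0\<^sub>m (dim_row ?F) (dim_col (f x))) ?F $$ (i + d x, j + d x)
      = four_block_mat (g x) (0\<^sub>m (dim_row (g x)) (dim_col ?G)) (0\<^sub>m (dim_row ?G) (dim_col (g x))) ?G $$ (i + d x, j + d x)"
      using E by simp
    moreover have "dim_row (f x) = d x" "dim_col (f x) = d x" "dim_row (g x) = d x" "dim_col (g x) = d x"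
      using fx gx by auto
    ultimately show "?F $$ (i,j) = ?G $$ (i,j)" using ij dF by simp
  next
    show "dim_row ?F = dim_row ?G" "dim_col ?F = dim_col ?G" using dF by auto
  qed
  moreover have "\<forall>y\<in>set xs. f y = g y"
  proof (rule Cons.IH)
    show "f y \<in> carrier_mat (d y) (d y) \<and> g y \<in> carrier_mat (d y) (d y)" if "y \<in> set xs" for y
      using Cons.prems(1)[of y] that by simp
  qed fact
  ultimately show ?case by simp
qed

lemma jordan_matrix_diag:
  "jordan_matrix (map (\<lambda>a. (1, a)) as) = mat (length as) (length as) (\<lambda>(i,j). if i = j then as ! i else 0)"
proof (induction as)
  case Nil
  then show ?case by (auto simp: jordan_matrix_def)
next
  case (Cons a as)
  have len: "(\<Sum>x\<leftarrow>as. Suc 0) = length as" by (induct as) auto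
  have "jordan_matrix (map (\<lambda>a. (1, a)) (a # as)) =
    four_block_mat (jordan_block 1 a) (0\<^sub>m 1 (length as)) (0\<^sub>m (length as) 1) (jordan_matrix (map (\<lambda>a. (1, a)) as))"
    by (simp add: jordan_matrix_def Let_def dim_diag_block_mat[where As="map _ _", folded jordan_matrix_def] o_def len)
  also have "\<dots> = mat (length (a # as)) (length (a # as)) (\<lambda>(i,j). if i = j then (a # as) ! i else 0)"
    unfolding Cons by (rule eq_matI) (auto simp: nth_Cons')
  finally show ?case .
qed

lemma sum_list_unit:
  fixes xs :: "complex list"
  assumes "\<forall>x\<in>set xs. cmod x \<le> 1" "sum_list xs = of_nat (length xs)"
  shows "\<forall>x\<in>set xs. x = 1"
  using assms
proof (induction xs)
  case Nil then show ?case by simp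
next
  case (Cons x xs)
  have reb: "Re (sum_list xs) \<le> of_nat (length xs)" if "\<forall>x\<in>set xs. cmod x \<le> 1" for xs :: "complex list"
    using that
  proof (induction xs)
    case (Cons y ys)
    have "Re y \<le> 1" using Cons.prems complex_Re_le_cmod[of y] by auto
    then show ?case using Cons by auto
  qed simp
  have h: "Re (sum_list xs) \<le> of_nat (length xs)" using reb Cons.prems by auto
  have s: "x + sum_list xs = of_nat (length xs) + 1" using Cons.prems by simp
  have "Re x + Re (sum_list xs) = of_nat (length xs) + 1"
    using arg_cong[OF s, of Re] by simp
  hence rex: "Re x \<ge> 1" using h by linarith
  have cx: "cmod x \<le> 1" using Cons.prems by auto
  have rle: "Re x \<le> 1" using cx complex_Re_le_cmod[of x] by linarith
  have "(Re x)^2 + (Im x)^2 \<le> 1"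
    using cx by (metis cmod_power2 abs_norm_cancel norm_ge_zero power_le_one)
  moreover have "Re x = 1" using rex rle by linarith
  ultimately have "Re x = 1 \<and> Im x = 0" by simp
  hence x1: "x = 1" by (simp add: complex_eq_iff)
  hence "sum_list xs = of_nat (length xs)" using s by simp
  then show ?case using Cons x1 by auto
qed

lemma la_main:
  fixes A :: "complex mat"
  assumes A: "A \<in> carrier_mat n n" and N: "N \<ge> 1" and pw: "A ^\<^sub>m Suc N = A"
    and tr: "mtr A = of_nat n"
  shows "A = 1\<^sub>m n"
proof -
  obtain as where "char_poly A = (\<Prod>a\<leftarrow>as. [:- a, 1:])"
    using char_poly_factorized[OF A] by auto
  then obtain n_as where jnf: "jordan_nf A n_as" using jordan_nf_exists[OF A] by blast
  define Jm where "Jm = jordan_matrix n_as"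
  from jnf obtain P Q where sw: "similar_mat_wit A Jm P Q" and nz: "0 \<notin> fst ` set n_as"
    unfolding jordan_nf_def similar_mat_def Jm_def by blast
  from sw A have Jc: "Jm \<in> carrier_mat n n" and P: "P \<in> carrier_mat n n" and Q: "Q \<in> carrier_mat n n"
    and PQ: "P * Q = 1\<^sub>m n" and QP: "Q * P = 1\<^sub>m n" and AE: "A = P * Jm * Q"
    unfolding similar_mat_wit_def Let_def by auto
  have bk: "Q * (P * X * Q) * P = X" if hX: "X \<in> carrier_mat n n" for X
  proof -
    have PX: "P * X \<in> carrier_mat n n" "P * X * Q \<in> carrier_mat n n" using P Q hX by auto
    have "Q * (P * X * Q) * P = Q * (P * X * Q * P)"
      by (rule assoc_mult_mat[OF Q PX(2) P])
    also have "P * X * Q * P = P * X * (Q * P)"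
      by (rule assoc_mult_mat[OF PX(1) Q P])
    also have "\<dots> = P * X" using QP right_mult_one_mat[OF PX(1)] by simp
    also have "Q * (P * X) = (Q * P) * X"
      by (rule assoc_mult_mat[OF Q P hX, symmetric])
    also have "\<dots> = X" using QP hX by simp
    finally show ?thesis .
  qed
  have Jpow: "Jm ^\<^sub>m Suc N = Jm"
  proof -
    have "A ^\<^sub>m Suc N = P * Jm ^\<^sub>m Suc N * Q" by (rule similar_mat_wit_pow_id[OF sw])
    hence "P * Jm ^\<^sub>m Suc N * Q = P * Jm * Q" using pw AE by simp
    hence "Q * (P * Jm ^\<^sub>m Suc N * Q) * P = Q * (P * Jm * Q) * P" by simp
    moreover have "Jm ^\<^sub>m Suc N \<in> carrier_mat n n" using Jc by (rule pow_carrier_mat)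
    ultimately show ?thesis using bk[of Jm] bk[of "Jm ^\<^sub>m Suc N"] Jc by metis
  qed
  have blocks: "\<forall>x\<in>set n_as. (\<lambda>(s,a). jordan_block s a ^\<^sub>m Suc N) x = (\<lambda>(s,a). jordan_block s a) x"
  proof (rule diag_block_mat_eq_blocks[where d = fst])
    show "(\<lambda>(s,a). jordan_block s a ^\<^sub>m Suc N) x \<in> carrier_mat (fst x) (fst x) \<and>
          (\<lambda>(s,a). jordan_block s a) x \<in> carrier_mat (fst x) (fst x)" for x
      by (cases x) auto
    show "diag_block_mat (map (\<lambda>(s,a). jordan_block s a ^\<^sub>m Suc N) n_as) =
          diag_block_mat (map (\<lambda>(s,a). jordan_block s a) n_as)"
      using Jpow unfolding Jm_def jordan_matrix_pow by (simp add: jordan_matrix_def)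
  qed
  have blk: "s = 1 \<and> a ^ Suc N = a" if sa: "(s,a) \<in> set n_as" for s a
  proof -
    have eq: "jordan_block s a ^\<^sub>m Suc N = jordan_block s a" using blocks sa by auto
    have s0: "s \<noteq> 0" using nz sa by force
    have d: "a ^ Suc N = a"
    proof -
      have "(jordan_block s a ^\<^sub>m Suc N) $$ (0,0) = jordan_block s a $$ (0,0)" using eq by simp
      thus ?thesis using s0 unfolding jordan_block_pow by simp
    qed
    have "s = 1"
    proof (rule ccontr)
      assume "s \<noteq> 1"
      hence s2: "1 < s" using s0 by simp
      have "(jordan_block s a ^\<^sub>m Suc N) $$ (0,1) = jordan_block s a $$ (0,1)" using eq by simp
      hence e1: "of_nat (Suc N) * a ^ N = 1" using s2 unfolding jordan_block_pow by simp
      hence "of_nat (Suc N) * a ^ Suc N = a" by (metis mult.assoc mult.commute mult_1 power_Suc)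
      hence "of_nat (Suc N) * a = a" by (simp only: d)
      hence "of_nat N * a = 0" by (simp add: algebra_simps)
      hence "a = 0" using N by simp
      thus False using e1 N by (simp add: power_0_left)
    qed
    thus ?thesis using d by simp
  qed
  define as' where "as' = map snd n_as"
  have nas: "n_as = map (\<lambda>a. (1, a)) as'"
  proof -
    have "(1, snd x) = x" if "x \<in> set n_as" for x using blk[of "fst x" "snd x"] that by (cases x) simp
    hence "map (\<lambda>x. (1, snd x)) n_as = n_as" by (rule map_idI)
    thus ?thesis unfolding as'_def by (simp add: o_def)
  qed
  have len: "length as' = n"
  proof -
    have "dim_row Jm = n" using Jc by simp
    moreover have "dim_row Jm = sum_list (map fst n_as)" unfolding Jm_def by simp
    moreover have "sum_list (map fst n_as) = length as'"
      unfolding nas by (induct as') auto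
    ultimately show ?thesis by simp
  qed
  have Jdiag: "Jm = mat n n (\<lambda>(i,j). if i = j then as' ! i else 0)"
    unfolding Jm_def nas jordan_matrix_diag len ..
  have "mtr Jm = sum_list as'"
    unfolding Jdiag mtr_def using len by (simp add: sum_list_sum_nth atLeast0LessThan)
  moreover have "mtr Jm = of_nat n" using mtr_similar[OF sw A] tr by simp
  ultimately have sl: "sum_list as' = of_nat (length as')" using len by simp
  have norms: "\<forall>x\<in>set as'. cmod x \<le> 1"
  proof
    fix x assume "x \<in> set as'"
    then obtain s where "(s,x) \<in> set n_as" unfolding as'_def by force
    hence xe: "x ^ Suc N = x" using blk by auto
    show "cmod x \<le> 1"
    proof (cases "x = 0")
      case False
      hence "x ^ N = 1" using xe by (metis mult_cancel_right1 power_Suc2)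
      hence "cmod x ^ N = 1" by (metis norm_one norm_power)
      hence "cmod x = 1" using N by (intro power_eq_imp_eq_base[of "cmod x" N 1]) simp_all
      thus ?thesis by simp
    qed simp
  qed
  have all1: "\<forall>x\<in>set as'. x = 1" by (rule sum_list_unit[OF norms sl])
  have "Jm = 1\<^sub>m n"
    unfolding Jdiag using all1 len by (intro eq_matI) auto
  thus ?thesis using AE PQ P Q by simp
qed



definition Tm :: "('a, 'b) monoid_scheme \<Rightarrow> ('a \<Rightarrow> 'a \<Rightarrow> complex) \<Rightarrow> (nat \<Rightarrow> 'a) \<Rightarrow> nat \<Rightarrow> 'a \<Rightarrow> complex mat" where
  "Tm G J e n p = mat n n (\<lambda>(i,j). J (e i \<otimes>\<^bsub>G\<^esub> inv\<^bsub>G\<^esub> (e j)) (p \<otimes>\<^bsub>G\<^esub> e j \<otimes>\<^bsub>G\<^esub> inv\<^bsub>G\<^esub> (e i)))"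

lemma Tm_carrier: "Tm G J e n p \<in> carrier_mat n n"
  unfolding Tm_def by simp

lemma (in comm_group) Tm_mult:
  assumes jac: "jacobi_function G J" and e: "bij_betw e {..<n} (carrier G)"
    and p: "p \<in> carrier G" and q: "q \<in> carrier G"
  shows "Tm G J e n p * Tm G J e n q = Tm G J e n (p \<otimes> q)"
proof (rule eq_matI)
  have sym: "\<And>a b. a \<in> carrier G \<Longrightarrow> b \<in> carrier G \<Longrightarrow> J a b = J b a"
    using jac unfolding jacobi_function_def by blast
  have C: "\<And>a1 a2 a3 a4. a1 \<in> carrier G \<Longrightarrow> a2 \<in> carrier G \<Longrightarrow> a3 \<in> carrier G \<Longrightarrow> a4 \<in> carrier G \<Longrightarrow>
        (\<Sum>b\<in>carrier G. J (a1 \<otimes> b) (a2 \<otimes> inv b) * J (a3 \<otimes> b) (a4 \<otimes> inv b)) = J (a1 \<otimes> a4) (a2 \<otimes> a3)"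
    using jac unfolding jacobi_function_def by blast
  fix i j assume "i < dim_row (Tm G J e n (p \<otimes> q))" "j < dim_col (Tm G J e n (p \<otimes> q))"
  hence ij: "i < n" "j < n" by (simp_all add: Tm_def)
  have ei: "e i \<in> carrier G" "e j \<in> carrier G" using e ij bij_betwE by blast+
  have "(Tm G J e n p * Tm G J e n q) $$ (i,j) =
     (\<Sum>l<n. J (e i \<otimes> inv (e l)) (p \<otimes> e l \<otimes> inv (e i)) * J (e l \<otimes> inv (e j)) (q \<otimes> e j \<otimes> inv (e l)))"
    using ij by (simp add: Tm_def scalar_prod_def atLeast0LessThan)
  also have "\<dots> = (\<Sum>b\<in>carrier G. J (e i \<otimes> inv b) (p \<otimes> b \<otimes> inv (e i)) * J (b \<otimes> inv (e j)) (q \<otimes> e j \<otimes> inv b))"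
    by (rule sum.reindex_bij_betw[OF e])
  also have "\<dots> = (\<Sum>b\<in>carrier G. J ((p \<otimes> inv (e i)) \<otimes> b) (e i \<otimes> inv b) * J (inv (e j) \<otimes> b) ((q \<otimes> e j) \<otimes> inv b))"
  proof (rule sum.cong[OF refl])
    fix b assume b: "b \<in> carrier G"
    have eq: "p \<otimes> b \<otimes> inv (e i) = (p \<otimes> inv (e i)) \<otimes> b"
      using b ei p by (simp add: m_ac)
    have 1: "J (e i \<otimes> inv b) (p \<otimes> b \<otimes> inv (e i)) = J ((p \<otimes> inv (e i)) \<otimes> b) (e i \<otimes> inv b)"
      unfolding eq using b ei p by (intro sym) auto
    have 2: "b \<otimes> inv (e j) = inv (e j) \<otimes> b" using b ei by (simp add: m_comm)
    show "J (e i \<otimes> inv b) (p \<otimes> b \<otimes> inv (e i)) * J (b \<otimes> inv (e j)) (q \<otimes> e j \<otimes> inv b) =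
      J ((p \<otimes> inv (e i)) \<otimes> b) (e i \<otimes> inv b) * J (inv (e j) \<otimes> b) ((q \<otimes> e j) \<otimes> inv b)"
      unfolding 1 2 ..
  qed
  also have "\<dots> = J ((p \<otimes> inv (e i)) \<otimes> (q \<otimes> e j)) (e i \<otimes> inv (e j))"
    using ei p q by (intro C) auto
  also have "\<dots> = J (e i \<otimes> inv (e j)) ((p \<otimes> inv (e i)) \<otimes> (q \<otimes> e j))"
    using ei p q by (intro sym) auto
  also have "(p \<otimes> inv (e i)) \<otimes> (q \<otimes> e j) = p \<otimes> q \<otimes> e j \<otimes> inv (e i)"
    using ei p q by (simp add: m_ac)
  also have "J (e i \<otimes> inv (e j)) (p \<otimes> q \<otimes> e j \<otimes> inv (e i)) = Tm G J e n (p \<otimes> q) $$ (i,j)"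
    using ij by (simp add: Tm_def)
  finally show "(Tm G J e n p * Tm G J e n q) $$ (i,j) = Tm G J e n (p \<otimes> q) $$ (i,j)" .
qed (simp_all add: Tm_def)

lemma (in comm_group) Tm_pow:
  assumes jac: "jacobi_function G J" and e: "bij_betw e {..<n} (carrier G)"
    and p: "p \<in> carrier G"
  shows "Tm G J e n p ^\<^sub>m Suc k = Tm G J e n (p [^] Suc k)"
proof (induction k)
  case 0
  show ?case using Tm_carrier[of G J e n p] p by simp
next
  case (Suc k)
  have "Tm G J e n p ^\<^sub>m Suc (Suc k) = Tm G J e n (p [^] Suc k) * Tm G J e n p"
    using Suc by simp
  also have "\<dots> = Tm G J e n (p [^] Suc k \<otimes> p)"
    using p by (intro Tm_mult[OF jac e]) auto
  also have "p [^] Suc k \<otimes> p = p [^] Suc (Suc k)" by simp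
  finally show ?case .
qed

lemma (in comm_group) Tm_mtr:
  assumes e: "bij_betw e {..<n} (carrier G)" and p: "p \<in> carrier G"
  shows "mtr (Tm G J e n p) = of_nat n * J \<one> p"
proof -
  have "mtr (Tm G J e n p) = (\<Sum>i<n. J (e i \<otimes> inv (e i)) (p \<otimes> e i \<otimes> inv (e i)))"
    unfolding mtr_def by (simp add: Tm_def)
  also have "\<dots> = (\<Sum>i<n. J \<one> p)"
  proof (rule sum.cong[OF refl])
    fix i assume "i \<in> {..<n}"
    hence ei: "e i \<in> carrier G" using e bij_betwE by blast
    show "J (e i \<otimes> inv (e i)) (p \<otimes> e i \<otimes> inv (e i)) = J \<one> p"
      using ei p by (simp add: m_assoc)
  qed
  finally show ?thesis by simp
qed



theorem mainTheorem8:
  fixes G :: "('a, 'b) monoid_scheme" and J :: "'a \<Rightarrow> 'a \<Rightarrow> complex"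
  assumes "comm_group G" and "finite (carrier G)" and "jacobi_function G J"
    and "\<alpha> \<in> carrier G" and "\<alpha> \<noteq> \<one>\<^bsub>G\<^esub>"
  shows "jstar G J \<one>\<^bsub>G\<^esub> \<alpha> \<noteq> 0"
proof -
  interpret comm_group G by (rule assms(1))
  note jac = assms(3) and a = assms(4) and a1 = assms(5)
  have sym: "\<And>x y. x \<in> carrier G \<Longrightarrow> y \<in> carrier G \<Longrightarrow> J x y = J y x"
    using jac unfolding jacobi_function_def by blast
  have js: "jstar G J \<one>\<^bsub>G\<^esub> \<alpha> = J \<one>\<^bsub>G\<^esub> \<alpha> - 1"
    using a1 unfolding jstar_def jdelta_def by simp
  show ?thesis
  proof
    assume "jstar G J \<one>\<^bsub>G\<^esub> \<alpha> = 0"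
    hence J1: "J \<one>\<^bsub>G\<^esub> \<alpha> = 1" using js by simp
    define n where "n = card (carrier G)"
    obtain e where e0: "bij_betw e {0..<n} (carrier G)"
      using ex_bij_betw_nat_finite[OF assms(2)] unfolding n_def by blast
    hence e: "bij_betw e {..<n} (carrier G)" by (simp add: atLeast0LessThan)
    have n1: "n \<ge> 1" unfolding n_def using assms(2) a by (metis card_0_eq empty_iff less_one not_le)
    let ?A = "Tm G J e n \<alpha>"
    have pw: "?A ^\<^sub>m Suc n = ?A"
    proof -
      have "\<alpha> [^]\<^bsub>G\<^esub> n = \<one>\<^bsub>G\<^esub>" unfolding n_def using pow_order_eq_1[OF a] by (simp add: order_def)
      hence "\<alpha> [^]\<^bsub>G\<^esub> Suc n = \<alpha>" using a by simp
      thus ?thesis using Tm_pow[OF jac e a, of n] by simp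
    qed
    have tr: "mtr ?A = of_nat n" using Tm_mtr[OF e a] J1 by simp
    have AI: "?A = 1\<^sub>m n" by (rule la_main[OF Tm_carrier n1 pw tr])
    obtain i0 where i0: "i0 < n" "e i0 = \<alpha>" using e a by (metis bij_betw_iff_bijections lessThan_iff)
    obtain j0 where j0: "j0 < n" "e j0 = \<one>\<^bsub>G\<^esub>" using e by (metis bij_betw_iff_bijections lessThan_iff one_closed)
    have "i0 \<noteq> j0" using i0 j0 a1 by auto
    hence "?A $$ (i0, j0) = 0" using AI i0 j0 by simp
    moreover have "?A $$ (i0, j0) = J \<alpha> \<one>\<^bsub>G\<^esub>" using i0 j0 a by (simp add: Tm_def)
    ultimately have "J \<alpha> \<one>\<^bsub>G\<^esub> = 0" by simp
    hence "J \<one>\<^bsub>G\<^esub> \<alpha> = 0" using sym[OF a one_closed] by simp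
    thus False using J1 by simp
  qed
qed

end
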